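(* Let $K$ be a nonempty compact convex set in $\mathbb{R}^n$, $\alpha=(u_1,u_2,\dots)$ a sequence of unit vectors, and $K_i=\mathrm{s}_{u_i}\cdots\mathrm{s}_{u_1}K$. If $L$ is a subsequential limit of $\mathrm{s}_\alpha K$, then $$\Omega(L)=\sup_i\Omega(K_i).$$
   Context: For a nonempty compact convex $K\subseteq\mathbb{R}^n$ and a unit vector $u$, the Steiner symmetrization $\mathrm{s}_uK$ is defined as follows: for each point $x$ of the orthogonal projection $\pi_uK$ of $K$ onto $u^\perp$, let $\ell_x(K)$ be the length of the segment $K\cap(x+\mathbb{R}u)$; then $\mathrm{s}_uK=\{x+tu:\ x\in\pi_uK,\ |t|\le \tfrac12\ell_x(K)\}$. Given a sequence $\alpha=(u_1,u_2,\dots)$ of unit vectors and $K$, the Steiner process is the sequence $K_i=\mathrm{s}_{u_i}\cdots\mathrm{s}_{u_1}K$; if $\lim_iK_i$ exists in the Hausdorff metric it is denoted $\mathrm{s}_\alpha K$, and a limit of a convergent subsequence of $(K_i)$ is called a subsequential limit of $\mathrm{s}_\alpha K$. $B$ is the closed unit ball centered at the origin, $V_n$ is volume, and $\Omega(K)=\int_0^\infty V_n(K\cap rB)e^{-r^2}\,dr$. *)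

theory Defs
  imports "HOL-Analysis.Analysis"
begin

definition proj_perp :: "'a::euclidean_space \<Rightarrow> 'a \<Rightarrow> 'a" where
  "proj_perp u y = y - (y \<bullet> u) *\<^sub>R u"

definition chord_length :: "'a::euclidean_space set \<Rightarrow> 'a \<Rightarrow> 'a \<Rightarrow> real" where
  "chord_length K u x = measure lebesgue {t::real. x + t *\<^sub>R u \<in> K}"

definition steiner :: "'a::euclidean_space \<Rightarrow> 'a set \<Rightarrow> 'a set" where
  "steiner u K = {x + t *\<^sub>R u | x t. x \<in> proj_perp u ` K \<and> \<bar>t\<bar> \<le> chord_length K u x / 2}"

text \<open>Steiner process: steiner_process u K i = s_{u_i} ... s_{u_1} K, where the
  direction sequence is u 0 = u_1, u 1 = u_2, ...; steiner_process u K 0 = K.\<close>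
fun steiner_process :: "(nat \<Rightarrow> 'a::euclidean_space) \<Rightarrow> 'a set \<Rightarrow> nat \<Rightarrow> 'a set" where
  "steiner_process u K 0 = K"
| "steiner_process u K (Suc i) = steiner (u i) (steiner_process u K i)"

definition hausdist :: "'a::metric_space set \<Rightarrow> 'a set \<Rightarrow> real" where
  "hausdist A B = Inf {e. 0 \<le> e \<and> A \<subseteq> (\<Union>b\<in>B. cball b e) \<and> B \<subseteq> (\<Union>a\<in>A. cball a e)}"

definition subseq_limit :: "(nat \<Rightarrow> 'a::metric_space set) \<Rightarrow> 'a set \<Rightarrow> bool" where
  "subseq_limit Ks L \<longleftrightarrow> compact L \<and> L \<noteq> {} \<and>
     (\<exists>r. strict_mono r \<and> (\<lambda>k. hausdist (Ks (r k)) L) \<longlonglongrightarrow> 0)"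

definition Omega :: "'a::euclidean_space set \<Rightarrow> real" where
  "Omega K = (LBINT r:{0..}. measure lebesgue (K \<inter> cball 0 r) * exp (- (r\<^sup>2)))"

end

theory Submission
  imports Defs "HOL-Probability.Distributions"
begin

lemma unit_inner: "norm (u::'a::euclidean_space) = 1 \<Longrightarrow> u \<bullet> u = 1"
  by (metis norm_eq_sqrt_inner real_sqrt_eq_1_iff)

lemma pp_inner: "norm u = 1 \<Longrightarrow> proj_perp u y \<bullet> u = 0"
  by (simp add: proj_perp_def inner_diff_left unit_inner)

lemma pp_decomp: "y = proj_perp u y + (y \<bullet> u) *\<^sub>R u"
  by (simp add: proj_perp_def)

lemma pp_add: "norm u = 1 \<Longrightarrow> proj_perp u (x + t *\<^sub>R u) = proj_perp u x"
  by (simp add: proj_perp_def inner_add_left unit_inner algebra_simps)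

lemma pp_perp: "x \<bullet> u = 0 \<Longrightarrow> proj_perp u x = x"
  by (simp add: proj_perp_def)

lemma pp_idem: "norm u = 1 \<Longrightarrow> proj_perp u (proj_perp u x) = proj_perp u x"
  by (simp add: pp_perp pp_inner)

lemma pp_linear: "linear (proj_perp u)"
  unfolding proj_perp_def
  by (intro linearI) (auto simp: inner_add_left algebra_simps)

lemma pp_continuous: "continuous_on S (proj_perp u)"
  unfolding proj_perp_def by (intro continuous_intros)

lemma steiner_mem:
  assumes u: "norm u = 1"
  shows "z \<in> steiner u K \<longleftrightarrow> proj_perp u z \<in> proj_perp u ` K \<and>
           \<bar>z \<bullet> u\<bar> \<le> chord_length K u (proj_perp u z) / 2"
proof
  assume "z \<in> steiner u K"
  then obtain x t where z: "z = x + t *\<^sub>R u" and x: "x \<in> proj_perp u ` K"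
     and t: "\<bar>t\<bar> \<le> chord_length K u x / 2"
    unfolding steiner_def by blast
  have xu: "x \<bullet> u = 0" using x pp_inner[OF u] by auto
  have "proj_perp u z = x" using z pp_add[OF u] pp_perp[OF xu] by simp
  moreover have "z \<bullet> u = t" using z xu by (simp add: inner_add_left unit_inner[OF u])
  ultimately show "proj_perp u z \<in> proj_perp u ` K \<and>
           \<bar>z \<bullet> u\<bar> \<le> chord_length K u (proj_perp u z) / 2" using x t by simp
next
  assume h: "proj_perp u z \<in> proj_perp u ` K \<and>
           \<bar>z \<bullet> u\<bar> \<le> chord_length K u (proj_perp u z) / 2"
  show "z \<in> steiner u K"
    unfolding steiner_def using h pp_decomp[of z u] by blast
qed

definition slice :: "'a::euclidean_space set \<Rightarrow> 'a \<Rightarrow> 'a \<Rightarrow> real set" where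
  "slice K u x = {t. x + t *\<^sub>R u \<in> K}"

lemma slice_compact:
  assumes "compact K" "norm u = 1"
  shows "compact (slice K u x)"
proof -
  have cl: "closed (slice K u x)"
    unfolding slice_def
    using continuous_closed_vimage[of K "\<lambda>t::real. x + t *\<^sub>R u"] compact_imp_closed[OF assms(1)]
    by (auto intro: continuous_intros simp: vimage_def)
  obtain B where B: "\<forall>y\<in>K. norm y \<le> B" using compact_imp_bounded[OF assms(1)] bounded_iff by blast
  have "\<bar>t\<bar> \<le> B + norm x" if "t \<in> slice K u x" for t
  proof -
    have "norm (x + t *\<^sub>R u) \<le> B" using that B by (auto simp: slice_def)
    moreover have "\<bar>t\<bar> = norm (t *\<^sub>R u)" using assms(2) by simp
    moreover have "norm (t *\<^sub>R u) \<le> norm (x + t *\<^sub>R u) + norm x"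
      by (metis add_diff_cancel_left' norm_triangle_ineq4 add.commute)
    ultimately show ?thesis by linarith
  qed
  then have "bounded (slice K u x)"
    unfolding bounded_iff by (metis real_norm_def)
  with cl show ?thesis by (simp add: compact_eq_bounded_closed)
qed

lemma slice_convex:
  assumes "convex K"
  shows "convex (slice K u x)"
proof -
  have *: "x + (a * s + b * t) *\<^sub>R u \<in> K"
    if h: "x + s *\<^sub>R u \<in> K" "x + t *\<^sub>R u \<in> K" "0 \<le> a" "0 \<le> b" "a + b = 1" for s t a b :: real
  proof -
    have "a *\<^sub>R (x + s *\<^sub>R u) + b *\<^sub>R (x + t *\<^sub>R u) \<in> K"
      using assms h unfolding convex_def by blast
    moreover have "a *\<^sub>R (x + s *\<^sub>R u) + b *\<^sub>R (x + t *\<^sub>R u) = (a + b) *\<^sub>R x + (a * s + b * t) *\<^sub>R u"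
      by (simp add: algebra_simps)
    ultimately show ?thesis using h(5) by simp
  qed
  show ?thesis unfolding convex_def slice_def using * by auto
qed

lemma real_compact_convex_interval:
  fixes S :: "real set"
  assumes "compact S" "convex S" "S \<noteq> {}"
  shows "S = {Inf S .. Sup S}"
proof
  have bdd: "bdd_below S" "bdd_above S"
    by (simp_all add: assms(1) compact_imp_bounded bounded_imp_bdd_below bounded_imp_bdd_above)
  show "S \<subseteq> {Inf S .. Sup S}" using bdd by (auto intro: cInf_lower cSup_upper)
  have "Inf S \<in> S" "Sup S \<in> S"
    using assms closed_contains_Inf closed_contains_Sup compact_imp_closed bdd by auto
  then show "{Inf S .. Sup S} \<subseteq> S"
    using assms(2) by (meson atLeastAtMost_iff convex_contains_segment is_interval_1 is_interval_convex_1 subsetI)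
qed

lemma chord_slice: "chord_length K u x = measure lebesgue (slice K u x)"
  by (simp add: chord_length_def slice_def)

lemma slice_interval:
  assumes K: "compact K" "convex K" and u: "norm u = 1" and x: "x \<in> proj_perp u ` K"
  shows "slice K u x \<noteq> {}" "slice K u x = {Inf (slice K u x) .. Sup (slice K u x)}"
    "chord_length K u x = Sup (slice K u x) - Inf (slice K u x)"
proof -
  obtain k where k: "k \<in> K" "x = proj_perp u k" using x by blast
  have "x + (k \<bullet> u) *\<^sub>R u = k" using k pp_decomp[of k u] by simp
  then have "k \<bullet> u \<in> slice K u x" using k by (simp add: slice_def)
  then show ne: "slice K u x \<noteq> {}" by blast
  show eq: "slice K u x = {Inf (slice K u x) .. Sup (slice K u x)}"
    by (rule real_compact_convex_interval[OF slice_compact[OF K(1) u] slice_convex[OF K(2)] ne])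
  have le: "Inf (slice K u x) \<le> Sup (slice K u x)"
    using eq ne by (metis atLeastatMost_empty_iff2 linorder_not_le)
  show "chord_length K u x = Sup (slice K u x) - Inf (slice K u x)"
    unfolding chord_slice by (subst eq) (simp add: le)
qed

definition steiner_pairs :: "'a::euclidean_space \<Rightarrow> 'a set \<Rightarrow> ('a \<times> 'a) set" where
  "steiner_pairs u K = {(y, w). y \<in> K \<and> w \<in> K \<and> proj_perp u y = proj_perp u w}"

definition steiner_map :: "'a::euclidean_space \<Rightarrow> 'a \<times> 'a \<Rightarrow> 'a" where
  "steiner_map u p = proj_perp u (fst p) + ((fst p \<bullet> u - snd p \<bullet> u) / 2) *\<^sub>R u"

lemma steiner_repr:
  assumes K: "compact K" "convex K" and u: "norm u = 1"
  shows "steiner u K = steiner_map u ` steiner_pairs u K"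
proof
  show "steiner u K \<subseteq> steiner_map u ` steiner_pairs u K"
  proof
    fix z assume z: "z \<in> steiner u K"
    define x where "x = proj_perp u z"
    have x: "x \<in> proj_perp u ` K" and zu: "\<bar>z \<bullet> u\<bar> \<le> chord_length K u x / 2"
      using z steiner_mem[OF u] x_def by auto
    define a where "a = Inf (slice K u x)"
    define c where "c = Sup (slice K u x)"
    have sl: "slice K u x = {a..c}" and ch: "chord_length K u x = c - a"
      using slice_interval[OF K u x] a_def c_def by auto
    define t1 where "t1 = (a + c) / 2 + z \<bullet> u"
    define t2 where "t2 = (a + c) / 2 - z \<bullet> u"
    have "-(c-a)/2 \<le> z \<bullet> u" "z \<bullet> u \<le> (c-a)/2" using zu ch by (auto simp: abs_le_iff)
    then have "t1 \<in> {a..c}" "t2 \<in> {a..c}" by (simp_all add: t1_def t2_def field_simps)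
    then have y1: "x + t1 *\<^sub>R u \<in> K" and y2: "x + t2 *\<^sub>R u \<in> K" using sl by (auto simp: slice_def)
    have xu: "x \<bullet> u = 0" using x_def pp_inner[OF u] by simp
    have p1: "proj_perp u (x + t1 *\<^sub>R u) = x" and p2: "proj_perp u (x + t2 *\<^sub>R u) = x"
      using pp_add[OF u] pp_perp[OF xu] by auto
    have i1: "(x + t1 *\<^sub>R u) \<bullet> u = t1" and i2: "(x + t2 *\<^sub>R u) \<bullet> u = t2"
      using xu unit_inner[OF u] by (auto simp: inner_add_left)
    have "steiner_map u (x + t1 *\<^sub>R u, x + t2 *\<^sub>R u) = x + ((t1 - t2) / 2) *\<^sub>R u"
      unfolding steiner_map_def using p1 i1 i2 by simp
    also have "(t1 - t2) / 2 = z \<bullet> u" by (simp add: t1_def t2_def)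
    finally have "steiner_map u (x + t1 *\<^sub>R u, x + t2 *\<^sub>R u) = z"
      using x_def pp_decomp[of z u] by simp
    moreover have "(x + t1 *\<^sub>R u, x + t2 *\<^sub>R u) \<in> steiner_pairs u K"
      using y1 y2 p1 p2 by (simp add: steiner_pairs_def)
    ultimately show "z \<in> steiner_map u ` steiner_pairs u K" by (metis image_eqI)
  qed
next
  show "steiner_map u ` steiner_pairs u K \<subseteq> steiner u K"
  proof clarify
    fix y w assume yw: "(y, w) \<in> steiner_pairs u K"
    then have y: "y \<in> K" and w: "w \<in> K" and pw: "proj_perp u y = proj_perp u w"
      by (auto simp: steiner_pairs_def)
    define x where "x = proj_perp u y"
    have x: "x \<in> proj_perp u ` K" using y x_def by auto
    define a where "a = Inf (slice K u x)"
    define c where "c = Sup (slice K u x)"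
    have sl: "slice K u x = {a..c}" and ch: "chord_length K u x = c - a"
      using slice_interval[OF K u x] a_def c_def by auto
    have "x + (y \<bullet> u) *\<^sub>R u = y" using x_def pp_decomp[of y u] by simp
    then have "y \<bullet> u \<in> {a..c}" using y sl by (auto simp: slice_def)
    have "x + (w \<bullet> u) *\<^sub>R u = w" using x_def pw pp_decomp[of w u] by simp
    then have "w \<bullet> u \<in> {a..c}" using w sl by (auto simp: slice_def)
    define s where "s = (y \<bullet> u - w \<bullet> u) / 2"
    have s: "\<bar>s\<bar> \<le> chord_length K u x / 2"
      using \<open>y \<bullet> u \<in> {a..c}\<close> \<open>w \<bullet> u \<in> {a..c}\<close> ch s_def by (auto simp: abs_le_iff)
    have xu: "x \<bullet> u = 0" using x_def pp_inner[OF u] by simp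
    have zm: "steiner_map u (y, w) = x + s *\<^sub>R u" by (simp add: steiner_map_def x_def s_def)
    have "proj_perp u (x + s *\<^sub>R u) = x" using pp_add[OF u] pp_perp[OF xu] by auto
    moreover have "(x + s *\<^sub>R u) \<bullet> u = s" using xu unit_inner[OF u] by (auto simp: inner_add_left)
    ultimately show "steiner_map u (y, w) \<in> steiner u K"
      unfolding zm steiner_mem[OF u] using x s by simp
  qed
qed

lemma steiner_props:
  assumes K: "compact K" "convex K" "K \<noteq> {}" and u: "norm u = 1"
  shows "compact (steiner u K)" "convex (steiner u K)" "steiner u K \<noteq> {}"
proof -
  have lin: "linear (steiner_map u)"
    unfolding steiner_map_def proj_perp_def
    by (intro linearI) (auto simp: inner_add_left algebra_simps add_divide_distrib diff_divide_distrib)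
  have cl: "closed {p::'a \<times> 'a. proj_perp u (fst p) - proj_perp u (snd p) = 0}"
    by (intro closed_Collect_eq continuous_intros) (auto simp: proj_perp_def intro!: continuous_intros)
  have "steiner_pairs u K = (K \<times> K) \<inter> {p. proj_perp u (fst p) - proj_perp u (snd p) = 0}"
    by (auto simp: steiner_pairs_def)
  then have cT: "compact (steiner_pairs u K)"
    using compact_Times[OF K(1) K(1)] cl by (simp add: compact_Int_closed)
  have cvT: "convex (steiner_pairs u K)"
  proof -
    have "convex {p::'a \<times> 'a. proj_perp u (fst p) - proj_perp u (snd p) = 0}"
    proof (rule subspace_imp_convex)
      have "linear (\<lambda>p::'a\<times>'a. proj_perp u (fst p) - proj_perp u (snd p))"
        unfolding proj_perp_def by (intro linearI) (auto simp: inner_add_left algebra_simps)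
      then show "subspace {p::'a \<times> 'a. proj_perp u (fst p) - proj_perp u (snd p) = 0}"
        using linear_subspace_kernel by blast
    qed
    then show ?thesis
      using \<open>steiner_pairs u K = _\<close> convex_Times[OF K(2) K(2)] convex_Int by metis
  qed
  show "compact (steiner u K)"
    unfolding steiner_repr[OF K(1,2) u]
    by (rule compact_continuous_image[OF linear_continuous_on[OF linear_conv_bounded_linear[THEN iffD1, OF lin]] cT])
  show "convex (steiner u K)"
    unfolding steiner_repr[OF K(1,2) u] by (rule convex_linear_image[OF lin cvT])
  obtain k where "k \<in> K" using K(3) by blast
  then have "(k, k) \<in> steiner_pairs u K" by (simp add: steiner_pairs_def)
  then show "steiner u K \<noteq> {}" unfolding steiner_repr[OF K(1,2) u] by blast
qed

lemma slice_formula: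
  fixes u :: "'a::euclidean_space"
  assumes u: "norm u = 1" and A: "A \<in> sets borel"
  shows "emeasure lborel A = (\<integral>\<^sup>+x. indicator {x. 0 \<le> x \<bullet> u \<and> x \<bullet> u \<le> 1} x *
            emeasure lborel {t. x + t *\<^sub>R u \<in> A} \<partial>lborel)"
proof -
  define S where "S = {x::'a. 0 \<le> x \<bullet> u \<and> x \<bullet> u \<le> 1}"
  have Sb: "S \<in> sets borel" unfolding S_def by measurable
  have P: "pair_sigma_finite (lborel :: 'a measure) (lborel :: real measure)"
    by unfold_locales
  have P2: "pair_sigma_finite (lborel :: real measure) (lborel :: 'a measure)"
    by unfold_locales
  have sl: "emeasure lborel {t. x + t *\<^sub>R u \<in> A} = (\<integral>\<^sup>+t. indicator A (x + t *\<^sub>R u) \<partial>lborel)" for x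
  proof -
    have "{t. x + t *\<^sub>R u \<in> A} = (\<lambda>t. x + t *\<^sub>R u) -` A \<inter> space lborel" by auto
    moreover have "(\<lambda>t. x + t *\<^sub>R u) -` A \<inter> space lborel \<in> sets lborel"
      using A by measurable
    ultimately show ?thesis
      by (simp add: nn_integral_indicator[symmetric] indicator_def del: nn_integral_indicator)
  qed
  have "(\<integral>\<^sup>+x. indicator S x * emeasure lborel {t. x + t *\<^sub>R u \<in> A} \<partial>lborel)
      = (\<integral>\<^sup>+x. \<integral>\<^sup>+t. indicator S x * indicator A (x + t *\<^sub>R u) \<partial>lborel \<partial>lborel)"
    unfolding sl
  proof (rule nn_integral_cong)
    fix x :: 'a
    show "indicator S x * (\<integral>\<^sup>+t. indicator A (x + t *\<^sub>R u) \<partial>lborel) =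
          (\<integral>\<^sup>+t. indicator S x * indicator A (x + t *\<^sub>R u) \<partial>lborel)"
      by (rule nn_integral_cmult[symmetric]) (use A in measurable)
  qed
  also have "\<dots> = (\<integral>\<^sup>+t. \<integral>\<^sup>+x. indicator S x * indicator A (x + t *\<^sub>R u) \<partial>lborel \<partial>lborel)"
    by (rule pair_sigma_finite.Fubini'[OF P, symmetric]) (use A Sb in measurable)
  also have "\<dots> = (\<integral>\<^sup>+t. \<integral>\<^sup>+y. indicator S (y - t *\<^sub>R u) * indicator A y \<partial>lborel \<partial>lborel)"
  proof (rule nn_integral_cong)
    fix t :: real
    have "(\<integral>\<^sup>+y. indicator S (y - t *\<^sub>R u) * indicator A y \<partial>lborel)
        = (\<integral>\<^sup>+y. indicator S (y - t *\<^sub>R u) * indicator A y \<partial>(distr lborel borel ((+) (t *\<^sub>R u))))"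
      by (simp add: lborel_distr_plus)
    also have "\<dots> = (\<integral>\<^sup>+x. indicator S (t *\<^sub>R u + x - t *\<^sub>R u) * indicator A (t *\<^sub>R u + x) \<partial>lborel)"
      by (rule nn_integral_distr) (use A Sb in measurable)
    finally show "(\<integral>\<^sup>+x. indicator S x * indicator A (x + t *\<^sub>R u) \<partial>lborel)
        = (\<integral>\<^sup>+y. indicator S (y - t *\<^sub>R u) * indicator A y \<partial>lborel)"
      by (simp add: add.commute)
  qed
  also have "\<dots> = (\<integral>\<^sup>+y. \<integral>\<^sup>+t. indicator S (y - t *\<^sub>R u) * indicator A y \<partial>lborel \<partial>lborel)"
    by (rule pair_sigma_finite.Fubini'[OF P]) (use A Sb in measurable)
  also have "\<dots> = (\<integral>\<^sup>+y. indicator A y \<partial>lborel)"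
  proof (rule nn_integral_cong)
    fix y :: 'a
    have "{t. y - t *\<^sub>R u \<in> S} = {y \<bullet> u - 1 .. y \<bullet> u}"
      using unit_inner[OF u] by (auto simp: S_def inner_diff_left)
    then have "(\<integral>\<^sup>+t. indicator S (y - t *\<^sub>R u) \<partial>lborel) = 1"
    proof -
      assume eq: "{t. y - t *\<^sub>R u \<in> S} = {y \<bullet> u - 1 .. y \<bullet> u}"
      have "(\<integral>\<^sup>+t. indicator S (y - t *\<^sub>R u) \<partial>lborel) = (\<integral>\<^sup>+t. indicator {y \<bullet> u - 1 .. y \<bullet> u} t \<partial>lborel)"
        by (rule nn_integral_cong) (use eq in \<open>auto simp: indicator_def\<close>)
      then show ?thesis by simp
    qed
    then show "(\<integral>\<^sup>+t. indicator S (y - t *\<^sub>R u) * indicator A y \<partial>lborel) = indicator A y"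
    proof -
      assume one: "(\<integral>\<^sup>+t. indicator S (y - t *\<^sub>R u) \<partial>lborel) = 1"
      have "(\<integral>\<^sup>+t. indicator S (y - t *\<^sub>R u) * indicator A y \<partial>lborel)
          = (\<integral>\<^sup>+t. indicator S (y - t *\<^sub>R u) \<partial>lborel) * indicator A y"
        by (rule nn_integral_multc) (use Sb in measurable)
      then show ?thesis using one by simp
    qed
  qed
  also have "\<dots> = emeasure lborel A" using A by simp
  finally show ?thesis unfolding S_def by simp
qed

lemma slice_compare:
  fixes u :: "'a::euclidean_space"
  assumes u: "norm u = 1" and A: "A \<in> sets borel" and B: "B \<in> sets borel"
    and le: "\<And>x. emeasure lborel {t. x + t *\<^sub>R u \<in> A} \<le> emeasure lborel {t. x + t *\<^sub>R u \<in> B}"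
  shows "emeasure lborel A \<le> emeasure lborel B"
  unfolding slice_formula[OF u A] slice_formula[OF u B]
  by (intro nn_integral_mono mult_left_mono le) auto

lemma emeasure_slice_shift:
  fixes u :: "'a::euclidean_space"
  assumes u: "norm u = 1" and A: "A \<in> sets borel"
  shows "emeasure lborel {t. x + t *\<^sub>R u \<in> A} = emeasure lborel {s. proj_perp u x + s *\<^sub>R u \<in> A}"
proof -
  define E where "E = {s. proj_perp u x + s *\<^sub>R u \<in> A}"
  have E: "E \<in> sets borel" unfolding E_def using A by measurable
  have eq: "x + t *\<^sub>R u = proj_perp u x + (x \<bullet> u + t) *\<^sub>R u" for t
    by (simp add: proj_perp_def algebra_simps)
  have "{t. x + t *\<^sub>R u \<in> A} = (\<lambda>t. (x \<bullet> u) + t) -` E \<inter> space lborel"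
    unfolding E_def by (auto simp: eq)
  also have "emeasure lborel \<dots> = emeasure (distr lborel borel ((+) (x \<bullet> u))) E"
    by (rule emeasure_distr[symmetric]) (use E in auto)
  also have "\<dots> = emeasure lborel E" by (simp add: lborel_distr_plus)
  finally show ?thesis unfolding E_def .
qed

lemma cball_slice:
  fixes u p :: "'a::euclidean_space"
  assumes u: "norm u = 1" and pu: "p \<bullet> u = 0"
  shows "(p + s *\<^sub>R u \<in> cball 0 r) \<longleftrightarrow> norm p \<le> r \<and> \<bar>s\<bar> \<le> sqrt (r\<^sup>2 - (norm p)\<^sup>2)"
proof -
  have "(norm (p + s *\<^sub>R u))\<^sup>2 = (p + s *\<^sub>R u) \<bullet> (p + s *\<^sub>R u)" by (rule power2_norm_eq_inner)
  also have "\<dots> = p \<bullet> p + s * s * (u \<bullet> u) + 2 * s * (p \<bullet> u)"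
    by (simp add: inner_add_left inner_add_right inner_commute algebra_simps)
  also have "\<dots> = (norm p)\<^sup>2 + s\<^sup>2" using pu unit_inner[OF u] by (simp add: dot_square_norm power2_eq_square)
  finally have n: "(norm (p + s *\<^sub>R u))\<^sup>2 = (norm p)\<^sup>2 + s\<^sup>2" .
  show ?thesis
  proof
    assume "p + s *\<^sub>R u \<in> cball 0 r"
    then have h: "norm (p + s *\<^sub>R u) \<le> r" by simp
    then have r0: "0 \<le> r" by (meson norm_ge_zero order_trans)
    have "(norm (p + s *\<^sub>R u))\<^sup>2 \<le> r\<^sup>2" by (rule power_mono[OF h norm_ge_zero])
    then have sq: "(norm p)\<^sup>2 + s\<^sup>2 \<le> r\<^sup>2" using n by simp
    then have "(norm p)\<^sup>2 \<le> r\<^sup>2" using zero_le_power2[of s] by linarith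
    then have "norm p \<le> r" using r0 by (rule power2_le_imp_le)
    moreover have "\<bar>s\<bar> \<le> sqrt (r\<^sup>2 - (norm p)\<^sup>2)"
      using sq by (simp add: real_le_rsqrt)
    ultimately show "norm p \<le> r \<and> \<bar>s\<bar> \<le> sqrt (r\<^sup>2 - (norm p)\<^sup>2)" by simp
  next
    assume h: "norm p \<le> r \<and> \<bar>s\<bar> \<le> sqrt (r\<^sup>2 - (norm p)\<^sup>2)"
    then have r0: "0 \<le> r" by (meson norm_ge_zero order_trans)
    have c0: "(norm p)\<^sup>2 \<le> r\<^sup>2" using h by (simp add: power_mono)
    have "\<bar>s\<bar>\<^sup>2 \<le> (sqrt (r\<^sup>2 - (norm p)\<^sup>2))\<^sup>2"
      using h by (intro power_mono) auto
    then have "s\<^sup>2 \<le> r\<^sup>2 - (norm p)\<^sup>2" using c0 by simp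
    then have "(norm (p + s *\<^sub>R u))\<^sup>2 \<le> r\<^sup>2" using n by simp
    then have "norm (p + s *\<^sub>R u) \<le> r" using r0 by (rule power2_le_imp_le)
    then show "p + s *\<^sub>R u \<in> cball 0 r" by simp
  qed
qed

lemma steiner_ball_measure:
  fixes u :: "'a::euclidean_space"
  assumes K: "compact K" "convex K" "K \<noteq> {}" and u: "norm u = 1"
  shows "measure lebesgue (K \<inter> cball 0 r) \<le> measure lebesgue (steiner u K \<inter> cball 0 r)"
proof -
  have cS: "compact (steiner u K)" using steiner_props[OF K u] by simp
  define A where "A = K \<inter> cball 0 r"
  define B where "B = steiner u K \<inter> cball 0 r"
  have cA: "compact A" and cB: "compact B"
    unfolding A_def B_def using K(1) cS by (auto intro: compact_Int_closed)
  have Ab: "A \<in> sets borel" and Bb: "B \<in> sets borel"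
    using cA cB by (auto intro: borel_compact)
  have key: "emeasure lborel {s. p + s *\<^sub>R u \<in> A} \<le> emeasure lborel {s. p + s *\<^sub>R u \<in> B}"
    if pu: "p \<bullet> u = 0" for p
  proof (cases "p \<in> proj_perp u ` K \<and> norm p \<le> r")
    case False
    have "{s. p + s *\<^sub>R u \<in> A} = {}"
    proof safe
      fix s assume "p + s *\<^sub>R u \<in> A"
      then have "p + s *\<^sub>R u \<in> K" "p + s *\<^sub>R u \<in> cball 0 r" by (auto simp: A_def)
      moreover have "proj_perp u (p + s *\<^sub>R u) = p" using pp_add[OF u] pp_perp[OF pu] by simp
      ultimately show "s \<in> {}" using False cball_slice[OF u pu] by (metis image_eqI)
    qed
    then show ?thesis by simp
  next
    case True
    then have pK: "p \<in> proj_perp u ` K" and pr: "norm p \<le> r" by auto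
    define l where "l = chord_length K u p"
    define \<rho> where "\<rho> = sqrt (r\<^sup>2 - (norm p)\<^sup>2)"
    have \<rho>0: "0 \<le> \<rho>" unfolding \<rho>_def using pr by (simp add: power_mono)
    have l0: "0 \<le> l" unfolding l_def chord_slice by simp
    have ppu: "proj_perp u (p + s *\<^sub>R u) = p" for s using pp_add[OF u] pp_perp[OF pu] by simp
    have ipu: "(p + s *\<^sub>R u) \<bullet> u = s" for s using pu unit_inner[OF u] by (simp add: inner_add_left)
    have Bm: "p + s *\<^sub>R u \<in> B \<longleftrightarrow> \<bar>s\<bar> \<le> l/2 \<and> \<bar>s\<bar> \<le> \<rho>" for s
      unfolding B_def using steiner_mem[OF u, of "p + s *\<^sub>R u" K] cball_slice[OF u pu, of s r] ppu ipu pK pr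
      by (simp add: l_def \<rho>_def)
    define m where "m = min (l/2) \<rho>"
    have Bs: "{s. p + s *\<^sub>R u \<in> B} = {-m .. m}"
      unfolding Bm m_def by (auto simp: abs_le_iff min_def)
    have m0: "0 \<le> m" using l0 \<rho>0 by (simp add: m_def)
    have As: "{s. p + s *\<^sub>R u \<in> A} \<subseteq> slice K u p" "{s. p + s *\<^sub>R u \<in> A} \<subseteq> {-\<rho>..\<rho>}"
      unfolding A_def slice_def using cball_slice[OF u pu] by (auto simp: \<rho>_def abs_le_iff)
    have Asets: "{s. p + s *\<^sub>R u \<in> A} \<in> sets lborel" using Ab by measurable
    have cs: "compact (slice K u p)" by (rule slice_compact[OF K(1) u])
    have "emeasure lborel (slice K u p) = ennreal l"
      unfolding l_def chord_slice
      using cs by (simp add: emeasure_eq_measure2 fmeasurable_compact borel_compact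
          measure_completion[symmetric] del: measure_completion)
    moreover have "slice K u p \<in> sets lborel" using cs by (simp add: borel_compact)
    ultimately have e1: "emeasure lborel {s. p + s *\<^sub>R u \<in> A} \<le> ennreal l"
      using emeasure_mono[OF As(1)] by (metis order_trans)
    have e2: "emeasure lborel {s. p + s *\<^sub>R u \<in> A} \<le> ennreal (2 * \<rho>)"
      using emeasure_mono[OF As(2), of lborel] \<rho>0 by simp
    have "emeasure lborel {s. p + s *\<^sub>R u \<in> B} = ennreal (m - - m)"
      unfolding Bs using m0 by (simp add: emeasure_lborel_Icc_eq del: emeasure_lborel_Icc)
    also have "m - - m = 2 * m" by simp
    finally have eB: "emeasure lborel {s. p + s *\<^sub>R u \<in> B} = ennreal (2 * m)" .
    moreover have "emeasure lborel {s. p + s *\<^sub>R u \<in> A} \<le> ennreal (2 * m)"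
      using e1 e2 by (cases "l/2 \<le> \<rho>") (auto simp: min_def m_def)
    ultimately show ?thesis by simp
  qed
  have "emeasure lborel A \<le> emeasure lborel B"
  proof (rule slice_compare[OF u Ab Bb])
    fix x
    show "emeasure lborel {t. x + t *\<^sub>R u \<in> A} \<le> emeasure lborel {t. x + t *\<^sub>R u \<in> B}"
      unfolding emeasure_slice_shift[OF u Ab, of x] emeasure_slice_shift[OF u Bb, of x]
      by (rule key) (rule pp_inner[OF u])
  qed
  then have "measure lborel A \<le> measure lborel B"
    unfolding measure_def using emeasure_compact_finite[OF cB] by (simp add: enn2real_mono)
  moreover have "measure lebesgue A = measure lborel A" "measure lebesgue B = measure lborel B"
    using Ab Bb by (simp_all add: measure_completion)
  ultimately show ?thesis by (simp add: A_def B_def)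
qed

lemma ball_measure_mono:
  assumes "compact A" "r \<le> r'"
  shows "measure lebesgue (A \<inter> cball 0 r) \<le> measure lebesgue (A \<inter> cball 0 r')"
proof (rule measure_mono_fmeasurable)
  show "A \<inter> cball 0 r \<subseteq> A \<inter> cball 0 r'" using assms(2) by auto
  show "A \<inter> cball 0 r \<in> sets lebesgue"
    using assms(1) by (intro lmeasurable_compact[THEN fmeasurableD] compact_Int_closed) auto
  show "A \<inter> cball 0 r' \<in> fmeasurable lebesgue"
    using assms(1) by (intro lmeasurable_compact compact_Int_closed) auto
qed

lemma ball_measure_le:
  assumes "compact A"
  shows "measure lebesgue (A \<inter> cball 0 r) \<le> measure lebesgue A"
proof (rule measure_mono_fmeasurable)
  show "A \<inter> cball 0 r \<subseteq> A" by auto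
  show "A \<inter> cball 0 r \<in> sets lebesgue"
    using assms(1) by (intro lmeasurable_compact[THEN fmeasurableD] compact_Int_closed) auto
  show "A \<in> fmeasurable lebesgue"
    using assms(1) by (intro lmeasurable_compact)
qed

lemma ball_measure_measurable:
  assumes "compact A"
  shows "(\<lambda>r. measure lebesgue (A \<inter> cball 0 r)) \<in> borel_measurable borel"
  by (rule borel_measurable_mono) (auto simp: mono_def intro: ball_measure_mono[OF assms])

definition omg :: "'a::euclidean_space set \<Rightarrow> real \<Rightarrow> real" where
  "omg A r = indicator {0..} r *\<^sub>R (measure lebesgue (A \<inter> cball 0 r) * exp (- (r\<^sup>2)))"

lemma Omega_omg: "Omega A = integral\<^sup>L lborel (omg A)"
  unfolding Omega_def omg_def[abs_def] set_lebesgue_integral_def by simp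

lemma omg_measurable:
  assumes "compact A" shows "omg A \<in> borel_measurable lborel"
proof -
  have [measurable]: "(\<lambda>r. measure lebesgue (A \<inter> cball 0 r)) \<in> borel_measurable borel"
    by (rule ball_measure_measurable[OF assms])
  show ?thesis unfolding omg_def by measurable
qed

lemma gauss_integrable: "integrable lborel (\<lambda>r::real. indicator {0..} r *\<^sub>R exp (- r\<^sup>2))"
  by (rule has_bochner_integral_iff[THEN iffD1, OF gaussian_moment_0, THEN conjunct1])

lemma omg_bound:
  assumes "\<And>r. measure lebesgue (A \<inter> cball 0 r) \<le> M"
  shows "norm (omg A r) \<le> M * (indicator {0..} r *\<^sub>R exp (- r\<^sup>2))"
proof -
  have "0 \<le> measure lebesgue (A \<inter> cball 0 r)" by simp
  then show ?thesis using assms[of r]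
    by (auto simp: omg_def indicator_def abs_mult intro!: mult_right_mono)
qed

lemma omg_integrable:
  assumes "compact A" shows "integrable lborel (omg A)"
proof (rule Bochner_Integration.integrable_bound)
  show "integrable lborel (\<lambda>r. measure lebesgue A * (indicator {0..} r *\<^sub>R exp (- r\<^sup>2)))"
    by (rule integrable_mult_right[OF gauss_integrable])
  show "omg A \<in> borel_measurable lborel" by (rule omg_measurable[OF assms])
  have "0 \<le> measure lebesgue A" by simp
  then show "AE x in lborel. norm (omg A x) \<le> norm (measure lebesgue A * (indicator {0..} x *\<^sub>R exp (- x\<^sup>2)))"
  proof (intro AE_I2)
    fix x
    have "norm (omg A x) \<le> measure lebesgue A * (indicator {0..} x *\<^sub>R exp (- x\<^sup>2))"
      by (rule omg_bound[of A "measure lebesgue A", OF ball_measure_le[OF assms]])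
    also have "\<dots> \<le> norm (measure lebesgue A * (indicator {0..} x *\<^sub>R exp (- x\<^sup>2)))"
      unfolding real_norm_def by (rule abs_ge_self)
    finally show "norm (omg A x) \<le> norm (measure lebesgue A * (indicator {0..} x *\<^sub>R exp (- x\<^sup>2)))" .
  qed
qed

lemma Omega_mono:
  assumes "compact A" "compact B"
    and le: "\<And>r. measure lebesgue (A \<inter> cball 0 r) \<le> measure lebesgue (B \<inter> cball 0 r)"
  shows "Omega A \<le> Omega B"
  unfolding Omega_omg
proof (rule integral_mono[OF omg_integrable[OF assms(1)] omg_integrable[OF assms(2)]])
  fix r :: real
  show "omg A r \<le> omg B r"
    using le[of r] by (auto simp: omg_def indicator_def intro!: mult_right_mono)
qed

lemma Omega_subset:
  assumes "compact A" "compact B" "A \<subseteq> B"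
  shows "Omega A \<le> Omega B"
proof (rule Omega_mono[OF assms(1,2)])
  fix r
  show "measure lebesgue (A \<inter> cball 0 r) \<le> measure lebesgue (B \<inter> cball 0 r)"
  proof (rule measure_mono_fmeasurable)
    show "A \<inter> cball 0 r \<subseteq> B \<inter> cball 0 r" using assms(3) by auto
    show "A \<inter> cball 0 r \<in> sets lebesgue"
      using assms(1) by (intro lmeasurable_compact[THEN fmeasurableD] compact_Int_closed) auto
    show "B \<inter> cball 0 r \<in> fmeasurable lebesgue"
      using assms(2) by (intro lmeasurable_compact compact_Int_closed) auto
  qed
qed

lemma Omega_nonneg: "0 \<le> Omega A"
  unfolding Omega_omg
  by (rule Bochner_Integration.integral_nonneg) (auto simp: omg_def indicator_def)

lemma Omega_lim:
  assumes cA: "\<And>m. compact (A m)" and c: "compact L"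
    and bd: "\<And>m r. measure lebesgue (A m \<inter> cball 0 r) \<le> M"
    and lim: "\<And>r. (\<lambda>m. measure lebesgue (A m \<inter> cball 0 r)) \<longlonglongrightarrow> measure lebesgue (L \<inter> cball 0 r)"
  shows "(\<lambda>m. Omega (A m)) \<longlonglongrightarrow> Omega L"
  unfolding Omega_omg
proof (rule integral_dominated_convergence)
  show "omg L \<in> borel_measurable lborel" by (rule omg_measurable[OF c])
  show "\<And>m. omg (A m) \<in> borel_measurable lborel" by (rule omg_measurable[OF cA])
  show "integrable lborel (\<lambda>r. M * (indicator {0..} r *\<^sub>R exp (- r\<^sup>2)))"
    by (rule integrable_mult_right[OF gauss_integrable])
  show "AE r in lborel. (\<lambda>m. omg (A m) r) \<longlonglongrightarrow> omg L r"
    unfolding omg_def by (intro AE_I2 tendsto_intros lim)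
  show "\<And>m. AE r in lborel. norm (omg (A m) r) \<le> M * (indicator {0..} r *\<^sub>R exp (- r\<^sup>2))"
    by (rule AE_I2, rule omg_bound, rule bd)
qed

lemma hausdist_lt:
  fixes A B :: "'a::metric_space set"
  assumes bA: "bounded A" and bB: "bounded B" and ne: "A \<noteq> {}" "B \<noteq> {}"
    and lt: "hausdist A B < e"
  shows "A \<subseteq> (\<Union>b\<in>B. cball b e)" "B \<subseteq> (\<Union>a\<in>A. cball a e)"
proof -
  define X where "X = {e. 0 \<le> e \<and> A \<subseteq> (\<Union>b\<in>B. cball b e) \<and> B \<subseteq> (\<Union>a\<in>A. cball a e)}"
  obtain a0 where a0: "a0 \<in> A" using ne by blast
  obtain R1 where R1: "\<forall>y\<in>A. dist a0 y \<le> R1" using bA bounded_any_center by blast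
  obtain R2 where R2: "\<forall>y\<in>B. dist a0 y \<le> R2" using bB bounded_any_center by blast
  define E where "E = \<bar>R1\<bar> + \<bar>R2\<bar>"
  have dAB: "dist a b \<le> E" if "a \<in> A" "b \<in> B" for a b
  proof -
    have "dist a b \<le> dist a0 a + dist a0 b" by (rule dist_triangle3)
    also have "\<dots> \<le> E" using R1 R2 that unfolding E_def by (smt (verit))
    finally show ?thesis .
  qed
  obtain b0 where b0: "b0 \<in> B" using ne by blast
  have "E \<in> X" unfolding X_def
  proof safe
    show "0 \<le> E" by (simp add: E_def)
  next
    fix a assume "a \<in> A"
    then show "a \<in> (\<Union>b\<in>B. cball b E)" using b0 dAB by (metis UN_iff dist_commute mem_cball)
  next
    fix b assume "b \<in> B"
    then show "b \<in> (\<Union>a\<in>A. cball a E)" using a0 dAB by (metis UN_iff mem_cball)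
  qed
  then have "X \<noteq> {}" by blast
  then obtain e' where e': "e' \<in> X" "e' < e"
    using cInf_lessD[of X e] lt unfolding hausdist_def X_def by blast
  then show "A \<subseteq> (\<Union>b\<in>B. cball b e)" "B \<subseteq> (\<Union>a\<in>A. cball a e)"
    unfolding X_def by (fastforce dest: subsetD)+
qed

lemma limit_convex:
  fixes L :: "'a::euclidean_space set"
  assumes cl: "closed L"
    and approx: "\<And>e. e > 0 \<Longrightarrow> \<exists>K. convex K \<and> K \<subseteq> (\<Union>l\<in>L. cball l e) \<and> L \<subseteq> (\<Union>x\<in>K. cball x e)"
  shows "convex L"
  unfolding convex_def
proof clarify
  fix x y :: 'a and a b :: real
  assume xy: "x \<in> L" "y \<in> L" "0 \<le> a" "0 \<le> b" "a + b = 1"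
  define z where "z = a *\<^sub>R x + b *\<^sub>R y"
  have "\<exists>l\<in>L. dist l z < \<epsilon>" if eps: "\<epsilon> > 0" for \<epsilon>
  proof -
    define e where "e = \<epsilon> / 3"
    have e0: "e > 0" using eps by (simp add: e_def)
    obtain K where K: "convex K" "K \<subseteq> (\<Union>l\<in>L. cball l e)" "L \<subseteq> (\<Union>x\<in>K. cball x e)"
      using approx[OF e0] by blast
    obtain x' where x': "x' \<in> K" "dist x' x \<le> e" using K(3) xy(1) by auto
    obtain y' where y': "y' \<in> K" "dist y' y \<le> e" using K(3) xy(2) by auto
    define z' where "z' = a *\<^sub>R x' + b *\<^sub>R y'"
    have z'K: "z' \<in> K" using K(1) x' y' xy unfolding z'_def convex_def by blast
    have "dist z' z = norm (a *\<^sub>R (x' - x) + b *\<^sub>R (y' - y))"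
      by (simp add: z'_def z_def dist_norm algebra_simps)
    also have "\<dots> \<le> norm (a *\<^sub>R (x' - x)) + norm (b *\<^sub>R (y' - y))" by (rule norm_triangle_ineq)
    also have "\<dots> = a * dist x' x + b * dist y' y" using xy by (simp add: dist_norm)
    also have "\<dots> \<le> a * e + b * e" using xy x' y' by (intro add_mono mult_left_mono) auto
    also have "\<dots> = e" using xy(5) by (simp add: algebra_simps flip: distrib_right)
    finally have d1: "dist z' z \<le> e" .
    obtain l where l: "l \<in> L" "dist l z' \<le> e" using K(2) z'K by auto
    have "dist l z \<le> dist l z' + dist z' z" by (rule dist_triangle)
    also have "\<dots> \<le> 2 * e" using l d1 by simp
    also have "\<dots> < \<epsilon>" using e0 by (simp add: e_def)
    finally show ?thesis using l by blast
  qed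
  then show "a *\<^sub>R x + b *\<^sub>R y \<in> L" using closed_approachable[OF cl] z_def by blast
qed

lemma inside_approx:
  fixes L K :: "'a::euclidean_space set"
  assumes K: "convex K" "closed K" and sub: "L \<subseteq> (\<Union>k\<in>K. cball k e)" and e: "0 \<le> e"
    and ball: "cball z e \<subseteq> L"
  shows "z \<in> K"
proof (rule ccontr)
  assume zK: "z \<notin> K"
  obtain a b where ab: "a \<bullet> z < b" "\<forall>x\<in>K. a \<bullet> x > b"
    using separating_hyperplane_closed_point[OF K zK] by blast
  have "z \<in> L" using ball e by auto
  then obtain k0 where "k0 \<in> K" using sub by auto
  then have a0: "a \<noteq> 0" using ab by force
  define v where "v = a /\<^sub>R norm a"
  have nv: "norm v = 1" using a0 by (simp add: v_def)
  define w where "w = z - e *\<^sub>R v"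
  have "w \<in> cball z e" using nv e by (simp add: w_def dist_norm)
  then have "w \<in> L" using ball by auto
  then obtain k where k: "k \<in> K" "dist k w \<le> e" using sub by auto
  have "a \<bullet> (k - w) \<le> norm a * norm (k - w)" by (rule norm_cauchy_schwarz)
  also have "\<dots> \<le> norm a * e" using k by (simp add: dist_norm mult_left_mono)
  finally have "a \<bullet> k \<le> a \<bullet> w + norm a * e" by (simp add: inner_diff_right)
  moreover have "a \<bullet> w = a \<bullet> z - e * norm a"
    using a0 by (simp add: w_def v_def inner_diff_right power2_norm_eq_inner[symmetric] power2_eq_square)
  ultimately have "a \<bullet> k \<le> a \<bullet> z" by (simp add: mult.commute)
  then show False using ab k(1) by force
qed

lemma shrink_ball:
  fixes L :: "'a::euclidean_space set"
  assumes cv: "convex L" and pb: "cball p \<delta> \<subseteq> L" and lam: "0 \<le> t" "t < 1" and x: "x \<in> L"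
  shows "cball (p + t *\<^sub>R (x - p)) ((1 - t) * \<delta>) \<subseteq> L"
proof
  fix w assume w: "w \<in> cball (p + t *\<^sub>R (x - p)) ((1 - t) * \<delta>)"
  define y where "y = p + t *\<^sub>R (x - p)"
  define v where "v = (w - y) /\<^sub>R (1 - t)"
  have l1: "1 - t > 0" using lam by simp
  have "norm (w - y) \<le> (1 - t) * \<delta>" using w by (simp add: y_def dist_norm norm_minus_commute)
  moreover have "norm v = norm (w - y) / (1 - t)" using l1 by (simp add: v_def divide_inverse_commute)
  ultimately have "norm v \<le> \<delta>" using l1 by (simp add: pos_divide_le_eq mult.commute)
  then have pv: "p + v \<in> L" using pb by (simp add: subset_eq dist_norm)
  have hv: "(1 - t) *\<^sub>R v = w - y" using l1 by (simp add: v_def)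
  have "t *\<^sub>R x + (1 - t) *\<^sub>R (p + v) = t *\<^sub>R x + (1 - t) *\<^sub>R p + (1 - t) *\<^sub>R v"
    by (simp add: scaleR_add_right)
  also have "\<dots> = t *\<^sub>R x + (1 - t) *\<^sub>R p + (w - y)" by (simp only: hv)
  also have "\<dots> = w" by (simp add: y_def algebra_simps)
  finally have "w = t *\<^sub>R x + (1 - t) *\<^sub>R (p + v)" by simp
  also have "\<dots> \<in> L" using cv x pv lam unfolding convex_def by auto
  finally show "w \<in> L" .
qed

definition upN :: "'a::euclidean_space set \<Rightarrow> nat \<Rightarrow> 'a set" where
  "upN L m = (\<lambda>p. fst p + snd p) ` (L \<times> cball 0 (1 / (real m + 1)))"

lemma upN_mem: "x \<in> upN L m \<longleftrightarrow> (\<exists>l\<in>L. dist l x \<le> 1 / (real m + 1))"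
proof
  assume "x \<in> upN L m"
  then obtain l v where "l \<in> L" "norm v \<le> 1 / (real m + 1)" "x = l + v"
    unfolding upN_def by auto
  then have "dist l x \<le> 1 / (real m + 1)" by (simp add: dist_norm)
  then show "\<exists>l\<in>L. dist l x \<le> 1 / (real m + 1)" using \<open>l \<in> L\<close> by blast
next
  assume "\<exists>l\<in>L. dist l x \<le> 1 / (real m + 1)"
  then obtain l where l: "l \<in> L" "dist l x \<le> 1 / (real m + 1)" by blast
  then have mem: "(l, x - l) \<in> L \<times> cball 0 (1 / (real m + 1))"
    by (simp add: dist_norm norm_minus_commute)
  have eq: "x = (\<lambda>p. fst p + snd p) (l, x - l)" by simp
  show "x \<in> upN L m" unfolding upN_def by (rule image_eqI[of x "\<lambda>p. fst p + snd p" "(l, x - l)", OF eq mem])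
qed

lemma upN_compact: "compact L \<Longrightarrow> compact (upN L m)"
  unfolding upN_def
  by (intro compact_continuous_image compact_Times compact_cball continuous_intros) auto

lemma upN_sub: "L \<subseteq> upN L m"
proof
  fix x assume "x \<in> L"
  moreover have "dist x x \<le> 1 / (real m + 1)" by simp
  ultimately show "x \<in> upN L m" unfolding upN_mem by blast
qed

lemma inv_small: "e > 0 \<Longrightarrow> \<exists>m::nat. 1 / (real m + 1) < e"
  by (metis reals_Archimedean inverse_eq_divide of_nat_Suc add.commute)

lemma upN_lim:
  fixes L :: "'a::euclidean_space set"
  assumes "compact L"
  shows "(\<lambda>m. measure lebesgue (upN L m \<inter> cball 0 \<rho>)) \<longlonglongrightarrow> measure lebesgue (L \<inter> cball 0 \<rho>)"
proof -
  have cm: "compact (upN L m \<inter> cball 0 \<rho>)" for m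
    by (intro compact_Int_closed upN_compact assms) auto
  have "(\<lambda>m. measure lebesgue (upN L m \<inter> cball 0 \<rho>)) \<longlonglongrightarrow> measure lebesgue (\<Inter>m. upN L m \<inter> cball 0 \<rho>)"
  proof (rule Lim_measure_decseq)
    show "range (\<lambda>m. upN L m \<inter> cball 0 \<rho>) \<subseteq> sets lebesgue"
      using cm by (auto intro: lmeasurable_compact[THEN fmeasurableD])
    show "decseq (\<lambda>m. upN L m \<inter> cball 0 \<rho>)"
    proof (rule decseq_SucI)
      fix m
      have le: "1 / (real (Suc m) + 1) \<le> 1 / (real m + 1)" by (simp add: frac_le)
      show "upN L (Suc m) \<inter> cball 0 \<rho> \<subseteq> upN L m \<inter> cball 0 \<rho>"
      proof clarify
        fix x assume x: "x \<in> upN L (Suc m)" "x \<in> cball 0 \<rho>"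
        then obtain l where l: "l \<in> L" "dist l x \<le> 1 / (real (Suc m) + 1)" unfolding upN_mem by blast
        then have "dist l x \<le> 1 / (real m + 1)" using le by linarith
        then show "x \<in> upN L m" using l(1) unfolding upN_mem by blast
      qed
    qed
    show "\<And>m. emeasure lebesgue (upN L m \<inter> cball 0 \<rho>) \<noteq> \<infinity>"
      using fmeasurableD2[OF lmeasurable_compact[OF cm]] by simp
  qed
  moreover have "(\<Inter>m. upN L m \<inter> cball 0 \<rho>) = L \<inter> cball 0 \<rho>"
  proof
    show "L \<inter> cball 0 \<rho> \<subseteq> (\<Inter>m. upN L m \<inter> cball 0 \<rho>)"
    proof clarify
      fix x m assume "x \<in> L" "x \<in> cball 0 \<rho>"
      then show "x \<in> upN L m" using upN_sub[of L m] by (simp add: subset_iff)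
    qed
    show "(\<Inter>m. upN L m \<inter> cball 0 \<rho>) \<subseteq> L \<inter> cball 0 \<rho>"
    proof
      fix x assume x: "x \<in> (\<Inter>m. upN L m \<inter> cball 0 \<rho>)"
      have "\<exists>l\<in>L. dist l x < e" if e0: "e > 0" for e
      proof -
        obtain m where m: "1 / (real m + 1) < e" using inv_small[OF e0] by blast
        have "x \<in> upN L m" using x by simp
        then obtain l where "l \<in> L" "dist l x \<le> 1 / (real m + 1)" unfolding upN_mem by blast
        then have "dist l x < e" using m by linarith
        then show ?thesis using \<open>l \<in> L\<close> by blast
      qed
      then have "x \<in> L" using closed_approachable[OF compact_imp_closed[OF assms]] by blast
      then show "x \<in> L \<inter> cball 0 \<rho>" using x by blast
    qed
  qed
  ultimately show ?thesis by simp
qed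

definition lam :: "nat \<Rightarrow> real" where "lam m = (real m + 1) / (real m + 2)"

definition lowL :: "'a::euclidean_space set \<Rightarrow> 'a \<Rightarrow> nat \<Rightarrow> 'a set" where
  "lowL L p m = (\<lambda>x. p + lam m *\<^sub>R (x - p)) ` L"

lemma lam_bounds: "0 < lam m" "lam m < 1"
  by (auto simp: lam_def)

lemma lam_alt: "lam m = 1 - 1 / (real m + 2)"
  by (simp add: lam_def field_simps)

lemma lam_mono: "lam m \<le> lam (Suc m)"
proof -
  have "1 / (real (Suc m) + 2) \<le> 1 / (real m + 2)" by (simp add: frac_le)
  then show ?thesis unfolding lam_alt by linarith
qed

lemma lowL_compact: "compact L \<Longrightarrow> compact (lowL L p m)"
  unfolding lowL_def by (intro compact_continuous_image continuous_intros) auto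

lemma convex_point: "convex L \<Longrightarrow> p \<in> L \<Longrightarrow> x \<in> L \<Longrightarrow> 0 \<le> a \<Longrightarrow> a \<le> 1 \<Longrightarrow> p + a *\<^sub>R (x - p) \<in> L"
proof -
  assume h: "convex L" "p \<in> L" "x \<in> L" "0 \<le> a" "a \<le> 1"
  have "(1 - a) *\<^sub>R p + a *\<^sub>R x \<in> L" using h unfolding convex_def by auto
  moreover have "(1 - a) *\<^sub>R p + a *\<^sub>R x = p + a *\<^sub>R (x - p)" by (simp add: algebra_simps)
  ultimately show ?thesis by simp
qed

lemma lowL_sub: "convex L \<Longrightarrow> p \<in> L \<Longrightarrow> lowL L p m \<subseteq> L"
  unfolding lowL_def using lam_bounds[of m] by (auto intro!: convex_point)

lemma lowL_inc:
  assumes "convex L" "p \<in> L"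
  shows "incseq (lowL L p)"
proof (rule incseq_SucI)
  fix m
  show "lowL L p m \<subseteq> lowL L p (Suc m)"
  proof
    fix y assume "y \<in> lowL L p m"
    then obtain x where x: "x \<in> L" "y = p + lam m *\<^sub>R (x - p)" unfolding lowL_def by auto
    define c where "c = lam m / lam (Suc m)"
    have c: "0 \<le> c" "c \<le> 1" using lam_bounds[of m] lam_bounds[of "Suc m"] lam_mono[of m]
      by (simp_all add: c_def divide_le_eq_1_pos)
    have hc: "lam (Suc m) * c = lam m" using lam_bounds[of "Suc m"] by (simp add: c_def)
    define x' where "x' = p + c *\<^sub>R (x - p)"
    have "x' \<in> L" unfolding x'_def by (rule convex_point[OF assms x(1) c])
    moreover have "y = p + lam (Suc m) *\<^sub>R (x' - p)"
      by (simp add: x x'_def scaleR_scaleR hc)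
    ultimately show "y \<in> lowL L p (Suc m)" unfolding lowL_def by blast
  qed
qed

lemma lowL_int:
  fixes L :: "'a::euclidean_space set"
  assumes z: "z \<in> interior L"
  shows "z \<in> (\<Union>m. lowL L p m)"
proof -
  obtain \<rho> where \<rho>: "\<rho> > 0" "cball z \<rho> \<subseteq> L" using z mem_interior_cball by blast
  obtain m :: nat where m: "norm (z - p) / (real m + 1) < \<rho>"
  proof -
    obtain n :: nat where n: "norm (z - p) < real n * \<rho>"
      using reals_Archimedean3[OF \<rho>(1)] by blast
    have "real n * \<rho> \<le> \<rho> * (real n + 1)" using \<rho>(1) by (simp add: algebra_simps)
    then have "norm (z - p) < \<rho> * (real n + 1)" using n by linarith
    then show ?thesis using that[of n] by (simp add: pos_divide_less_eq)
  qed
  define x where "x = p + ((real m + 2) / (real m + 1)) *\<^sub>R (z - p)"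
  have "x - z = ((real m + 2) / (real m + 1) - 1) *\<^sub>R (z - p)"
    by (simp add: x_def algebra_simps)
  moreover have "(real m + 2) / (real m + 1) - 1 = 1 / (real m + 1)" by (simp add: field_simps)
  ultimately have "x - z = (1 / (real m + 1)) *\<^sub>R (z - p)" by simp
  then have "dist z x = norm (z - p) / (real m + 1)"
    by (simp add: dist_norm norm_minus_commute)
  then have "x \<in> cball z \<rho>" using m by simp
  then have xL: "x \<in> L" using \<rho>(2) by blast
  have pos: "real m + 1 > 0" "real m + 2 > 0" by simp_all
  have "lam m * ((real m + 2) / (real m + 1)) = ((real m + 1) * (real m + 2)) / ((real m + 2) * (real m + 1))"
    unfolding lam_def by (rule times_divide_times_eq)
  also have "\<dots> = 1" using pos by (simp add: mult.commute)
  finally have a1: "lam m * ((real m + 2) / (real m + 1)) = 1" .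
  have xp: "x - p = ((real m + 2) / (real m + 1)) *\<^sub>R (z - p)" by (simp add: x_def)
  have "p + lam m *\<^sub>R (x - p) = p + (lam m * ((real m + 2) / (real m + 1))) *\<^sub>R (z - p)"
    by (simp only: xp scaleR_scaleR)
  also have "\<dots> = z" by (simp only: a1 scaleR_one) simp
  finally have "z = p + lam m *\<^sub>R (x - p)" by simp
  then have "z \<in> lowL L p m" unfolding lowL_def using xL by blast
  then show ?thesis by blast
qed

lemma lowL_lim:
  fixes L :: "'a::euclidean_space set"
  assumes cL: "compact L" "convex L" and p: "p \<in> L"
  shows "(\<lambda>m. measure lebesgue (lowL L p m \<inter> cball 0 \<rho>)) \<longlonglongrightarrow> measure lebesgue (L \<inter> cball 0 \<rho>)"
proof -
  have cm: "compact (lowL L p m \<inter> cball 0 \<rho>)" for m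
    by (intro compact_Int_closed lowL_compact cL) auto
  have cLb: "compact (L \<inter> cball 0 \<rho>)" by (intro compact_Int_closed cL) auto
  have Uf: "(\<Union>m. lowL L p m \<inter> cball 0 \<rho>) \<in> sets lebesgue"
    using cm by (intro sets.countable_UN) (auto intro: lmeasurable_compact[THEN fmeasurableD])
  have Usub: "(\<Union>m. lowL L p m \<inter> cball 0 \<rho>) \<subseteq> L \<inter> cball 0 \<rho>"
    using lowL_sub[OF cL(2) p] by blast
  have "(\<lambda>m. measure lebesgue (lowL L p m \<inter> cball 0 \<rho>)) \<longlonglongrightarrow> measure lebesgue (\<Union>m. lowL L p m \<inter> cball 0 \<rho>)"
  proof (rule Lim_measure_incseq)
    show "range (\<lambda>m. lowL L p m \<inter> cball 0 \<rho>) \<subseteq> sets lebesgue"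
      using cm by (auto intro: lmeasurable_compact[THEN fmeasurableD])
    show "incseq (\<lambda>m. lowL L p m \<inter> cball 0 \<rho>)"
      using lowL_inc[OF cL(2) p] by (auto simp: incseq_def)
    have "emeasure lebesgue (\<Union>m. lowL L p m \<inter> cball 0 \<rho>) \<le> emeasure lebesgue (L \<inter> cball 0 \<rho>)"
      by (rule emeasure_mono[OF Usub]) (use cLb in \<open>auto intro: lmeasurable_compact[THEN fmeasurableD]\<close>)
    then have "emeasure lebesgue (\<Union>m. lowL L p m \<inter> cball 0 \<rho>) \<noteq> top"
      by (rule neq_top_trans[OF fmeasurableD2[OF lmeasurable_compact[OF cLb]]])
    then show "emeasure lebesgue (\<Union>m. lowL L p m \<inter> cball 0 \<rho>) \<noteq> \<infinity>" by simp
  qed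
  moreover have "measure lebesgue (\<Union>m. lowL L p m \<inter> cball 0 \<rho>) = measure lebesgue (L \<inter> cball 0 \<rho>)"
  proof (rule antisym)
    show "measure lebesgue (\<Union>m. lowL L p m \<inter> cball 0 \<rho>) \<le> measure lebesgue (L \<inter> cball 0 \<rho>)"
      by (rule measure_mono_fmeasurable[OF Usub Uf lmeasurable_compact[OF cLb]])
    have null: "frontier L \<in> null_sets lebesgue"
      by (rule negligible_iff_null_sets[THEN iffD1, OF negligible_convex_frontier[OF cL(2)]])
    have "measure lebesgue (L \<inter> cball 0 \<rho>) = measure lebesgue (L \<inter> cball 0 \<rho> - frontier L)"
      by (rule measure_Diff_null_set[symmetric, OF fmeasurableD[OF lmeasurable_compact[OF cLb]] null])
    also have "\<dots> \<le> measure lebesgue (\<Union>m. lowL L p m \<inter> cball 0 \<rho>)"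
    proof (rule measure_mono_fmeasurable)
      show "L \<inter> cball 0 \<rho> - frontier L \<subseteq> (\<Union>m. lowL L p m \<inter> cball 0 \<rho>)"
      proof
        fix z assume z: "z \<in> L \<inter> cball 0 \<rho> - frontier L"
        have "closure L = L" using closure_closed[OF compact_imp_closed[OF cL(1)]] .
        then have "z \<in> interior L" using z by (auto simp: frontier_def)
        then obtain m where "z \<in> lowL L p m" using lowL_int[of z L p] by blast
        then show "z \<in> (\<Union>m. lowL L p m \<inter> cball 0 \<rho>)" using z by blast
      qed
      show "L \<inter> cball 0 \<rho> - frontier L \<in> sets lebesgue"
        by (rule sets.Diff[OF fmeasurableD[OF lmeasurable_compact[OF cLb]] null_setsD2[OF null]])
      show "(\<Union>m. lowL L p m \<inter> cball 0 \<rho>) \<in> fmeasurable lebesgue"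
        using fmeasurableI2[OF lmeasurable_compact[OF cLb] Usub Uf] .
    qed
    finally show "measure lebesgue (L \<inter> cball 0 \<rho>) \<le> measure lebesgue (\<Union>m. lowL L p m \<inter> cball 0 \<rho>)" .
  qed
  ultimately show ?thesis by simp
qed

lemma process_props:
  assumes K: "compact K" "convex K" "K \<noteq> {}" and u: "\<And>i. norm (u i) = 1"
  shows "compact (steiner_process u K i) \<and> convex (steiner_process u K i) \<and> steiner_process u K i \<noteq> {}"
proof (induct i)
  case 0 then show ?case using K by simp
next
  case (Suc i)
  then show ?case using steiner_props[of "steiner_process u K i" "u i"] u by simp
qed

lemma process_mono:
  assumes K: "compact K" "convex K" "K \<noteq> {}" and u: "\<And>i. norm (u i) = 1" and ij: "i \<le> j"
  shows "Omega (steiner_process u K i) \<le> Omega (steiner_process u K j)"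
  using ij
proof (induct rule: dec_induct)
  case base then show ?case by simp
next
  case (step n)
  have P: "compact (steiner_process u K n)" "convex (steiner_process u K n)" "steiner_process u K n \<noteq> {}"
    using process_props[OF K u] by auto
  have "Omega (steiner_process u K n) \<le> Omega (steiner_process u K (Suc n))"
    unfolding steiner_process.simps
    by (rule Omega_mono[OF P(1) steiner_props(1)[OF P u] steiner_ball_measure[OF P u]])
  then show ?case using step by linarith
qed

theorem proposition4p2:
  fixes K L :: "'a::euclidean_space set" and u :: "nat \<Rightarrow> 'a"
  assumes "compact K" and "convex K" and "K \<noteq> {}"
    and "\<And>i. norm (u i) = 1"
    and "subseq_limit (steiner_process u K) L"
  shows "Omega L = (SUP i\<in>{1..}. Omega (steiner_process u K i))"
proof -
  define Ks where "Ks = steiner_process u K"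
  have P: "compact (Ks i)" "convex (Ks i)" "Ks i \<noteq> {}" for i
    using process_props[OF assms(1-4)] by (auto simp: Ks_def)
  have mono: "i \<le> j \<Longrightarrow> Omega (Ks i) \<le> Omega (Ks j)" for i j
    using process_mono[OF assms(1-4)] by (simp add: Ks_def)
  obtain r where cL: "compact L" and neL: "L \<noteq> {}" and r: "strict_mono r"
    and lim: "(\<lambda>k. hausdist (Ks (r k)) L) \<longlonglongrightarrow> 0"
    using assms(5) unfolding subseq_limit_def Ks_def by blast
  have rge: "k \<le> r k" for k by (rule seq_suble[OF r])
  have approx: "eventually (\<lambda>k. Ks (r k) \<subseteq> (\<Union>l\<in>L. cball l e) \<and> L \<subseteq> (\<Union>x\<in>Ks (r k). cball x e)) sequentially"
    if e0: "e > 0" for e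
  proof -
    have "eventually (\<lambda>k. hausdist (Ks (r k)) L < e) sequentially"
      using order_tendstoD(2)[OF lim e0] .
    then show ?thesis
    proof (rule eventually_mono)
      fix k assume "hausdist (Ks (r k)) L < e"
      then show "Ks (r k) \<subseteq> (\<Union>l\<in>L. cball l e) \<and> L \<subseteq> (\<Union>x\<in>Ks (r k). cball x e)"
        using hausdist_lt[of "Ks (r k)" L e] P compact_imp_bounded cL neL by blast
    qed
  qed
  have cvL: "convex L"
  proof (rule limit_convex[OF compact_imp_closed[OF cL]])
    fix e :: real assume e0: "e > 0"
    obtain N where "\<forall>k\<ge>N. Ks (r k) \<subseteq> (\<Union>l\<in>L. cball l e) \<and> L \<subseteq> (\<Union>x\<in>Ks (r k). cball x e)"
      using approx[OF e0] unfolding eventually_sequentially by blast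
    then show "\<exists>K. convex K \<and> K \<subseteq> (\<Union>l\<in>L. cball l e) \<and> L \<subseteq> (\<Union>x\<in>K. cball x e)"
      using P(2) by blast
  qed
  have up: "Omega (Ks i) \<le> Omega L" for i
  proof -
    have limN: "(\<lambda>m. Omega (upN L m)) \<longlonglongrightarrow> Omega L"
    proof (rule Omega_lim[OF upN_compact[OF cL] cL])
      fix m and \<rho> :: real
      have "upN L m \<subseteq> upN L 0"
      proof
        fix x assume "x \<in> upN L m"
        then obtain l where l: "l \<in> L" "dist l x \<le> 1 / (real m + 1)" unfolding upN_mem by blast
        have "1 / (real m + 1) \<le> 1 / (real 0 + 1)" by (simp add: frac_le)
        then have "dist l x \<le> 1 / (real 0 + 1)" using l by linarith
        then show "x \<in> upN L 0" using l(1) unfolding upN_mem by blast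
      qed
      then show "measure lebesgue (upN L m \<inter> cball 0 \<rho>) \<le> measure lebesgue (upN L 0)"
        using upN_compact[OF cL]
        by (intro measure_mono_fmeasurable) (auto intro: lmeasurable_compact[THEN fmeasurableD]
            lmeasurable_compact compact_Int_closed)
    next
      fix \<rho> :: real
      show "(\<lambda>m. measure lebesgue (upN L m \<inter> cball 0 \<rho>)) \<longlonglongrightarrow> measure lebesgue (L \<inter> cball 0 \<rho>)"
        by (rule upN_lim[OF cL])
    qed
    have "Omega (Ks i) \<le> Omega (upN L m)" for m
    proof -
      have e0: "1 / (real m + 1) > 0" by simp
      obtain N where N: "\<forall>k\<ge>N. Ks (r k) \<subseteq> (\<Union>l\<in>L. cball l (1 / (real m + 1)))"
        using approx[OF e0] unfolding eventually_sequentially by blast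
      define k where "k = max N i"
      have sub: "Ks (r k) \<subseteq> upN L m"
      proof
        fix x assume "x \<in> Ks (r k)"
        moreover have "Ks (r k) \<subseteq> (\<Union>l\<in>L. cball l (1 / (real m + 1)))" using N k_def by simp
        ultimately have "x \<in> (\<Union>l\<in>L. cball l (1 / (real m + 1)))" by blast
        then obtain l where "l \<in> L" "dist l x \<le> 1 / (real m + 1)" by auto
        then show "x \<in> upN L m" unfolding upN_mem by blast
      qed
      have "i \<le> r k" using rge[of k] k_def by linarith
      then have "Omega (Ks i) \<le> Omega (Ks (r k))" by (rule mono)
      also have "\<dots> \<le> Omega (upN L m)" by (rule Omega_subset[OF P(1) upN_compact[OF cL] sub])
      finally show ?thesis .
    qed
    then show ?thesis by (intro LIMSEQ_le_const[OF limN]) blast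
  qed
  have bdd: "bdd_above ((\<lambda>i. Omega (Ks i)) ` {1..})"
    using up by (intro bdd_aboveI2) blast
  have S_le: "(SUP i\<in>{1..}. Omega (Ks i)) \<le> Omega L"
    by (rule cSUP_least) (use up in auto)
  have le_S: "Omega (Ks j) \<le> (SUP i\<in>{1..}. Omega (Ks i))" if "1 \<le> j" for j
    by (rule cSUP_upper[OF _ bdd]) (use that in auto)
  have L_le: "Omega L \<le> (SUP i\<in>{1..}. Omega (Ks i))"
  proof (cases "interior L = {}")
    case True
    have "frontier L = L"
      using True closure_closed[OF compact_imp_closed[OF cL]] by (simp add: frontier_def)
    then have negL: "negligible L" using negligible_convex_frontier[OF cvL] by simp
    have "Omega L \<le> Omega (Ks 1)"
    proof (rule Omega_mono[OF cL P(1)])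
      fix \<rho> :: real
      have "negligible (L \<inter> cball 0 \<rho>)" by (rule negligible_subset[OF negL]) auto
      then have "measure lebesgue (L \<inter> cball 0 \<rho>) = 0" by (rule negligible_imp_measure0)
      then show "measure lebesgue (L \<inter> cball 0 \<rho>) \<le> measure lebesgue (Ks 1 \<inter> cball 0 \<rho>)" by simp
    qed
    also have "\<dots> \<le> (SUP i\<in>{1..}. Omega (Ks i))" by (rule le_S) simp
    finally show ?thesis .
  next
    case False
    then obtain p where pint: "p \<in> interior L" by blast
    then obtain \<delta> where \<delta>: "\<delta> > 0" "cball p \<delta> \<subseteq> L" using mem_interior_cball by blast
    have pL: "p \<in> L" using pint interior_subset by blast
    have limL: "(\<lambda>m. Omega (lowL L p m)) \<longlonglongrightarrow> Omega L"
    proof (rule Omega_lim[OF lowL_compact[OF cL] cL])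
      fix m and \<rho> :: real
      show "measure lebesgue (lowL L p m \<inter> cball 0 \<rho>) \<le> measure lebesgue L"
        using lowL_sub[OF cvL pL, of m] lowL_compact[OF cL, of p m] cL
        by (intro measure_mono_fmeasurable) (auto intro: lmeasurable_compact[THEN fmeasurableD]
            lmeasurable_compact compact_Int_closed)
    next
      fix \<rho> :: real
      show "(\<lambda>m. measure lebesgue (lowL L p m \<inter> cball 0 \<rho>)) \<longlonglongrightarrow> measure lebesgue (L \<inter> cball 0 \<rho>)"
        by (rule lowL_lim[OF cL cvL pL])
    qed
    have "Omega (lowL L p m) \<le> (SUP i\<in>{1..}. Omega (Ks i))" for m
    proof -
      define e where "e = (1 - lam m) * \<delta>"
      have e0: "e > 0" using lam_bounds[of m] \<delta> by (simp add: e_def)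
      obtain N where N: "\<forall>k\<ge>N. L \<subseteq> (\<Union>x\<in>Ks (r k). cball x e)"
        using approx[OF e0] unfolding eventually_sequentially by blast
      define k where "k = max N 1"
      have Lsub: "L \<subseteq> (\<Union>x\<in>Ks (r k). cball x e)" using N k_def by simp
      have sub: "lowL L p m \<subseteq> Ks (r k)"
      proof
        fix y assume "y \<in> lowL L p m"
        then obtain x where x: "x \<in> L" "y = p + lam m *\<^sub>R (x - p)" unfolding lowL_def by blast
        have yb: "cball y e \<subseteq> L"
          unfolding x(2) e_def
          by (rule shrink_ball[OF cvL \<delta>(2) _ _ x(1)]) (use lam_bounds[of m] in auto)
        show "y \<in> Ks (r k)"
          by (rule inside_approx[OF P(2) compact_imp_closed[OF P(1)] Lsub less_imp_le[OF e0] yb])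
      qed
      have "Omega (lowL L p m) \<le> Omega (Ks (r k))"
        by (rule Omega_subset[OF lowL_compact[OF cL] P(1) sub])
      also have "\<dots> \<le> (SUP i\<in>{1..}. Omega (Ks i))"
        using rge[of k] k_def by (intro le_S) linarith
      finally show ?thesis .
    qed
    then show ?thesis by (intro LIMSEQ_le_const2[OF limL]) blast
  qed
  show ?thesis using S_le L_le unfolding Ks_def by simp
qed

end
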